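(* For all $i,j\in\{0,\dots,r-1\}$, as $\epsilon\to0$, uniformly for $A\in W_i$, $B\in W_j$ of norm at most $1$, \[ H_{ij}(\epsilon)(A,B)=\begin{cases}O(\epsilon^{i+j+1})&\text{if }i+j\text{ is odd},\\ (-1)^{(i-j)/2}\,b_{1+(i+j)/2}\,\epsilon^{i+j}\langle AS^ie,BS^je\rangle+O(\epsilon^{i+j+2})&\text{if }i+j\text{ is even}.\end{cases} \]
   Context: $\mathfrak g=\mathfrak g_1\oplus\mathfrak g_2$ is the Lie algebra of a $2$-step stratified group ($[\mathfrak g_1,\mathfrak g_1]=\mathfrak g_2\ne\{0\}$, $[\mathfrak g,\mathfrak g_2]=0$), and $\langle\cdot,\cdot\rangle$ is an inner product on $\mathfrak g_1$. For $\mu\in\mathfrak g_2^*$, $J_\mu$ is the skew-symmetric endomorphism of $\mathfrak g_1$ with $\langle J_\mu x,x'\rangle=\mu([x,x'])$; $V=\{J_\mu:\mu\in\mathfrak g_2^*\}$, and $V_{\mathrm{gen}}$ is the set of elements of $V$ with the maximal number of distinct eigenvalues among elements of $V$. Fix $S\in V_{\mathrm{gen}}$ and $e\in\mathfrak g_1$ whose orthogonal projection onto each eigenspace of $S^2$ is nonzero. For $j\in\mathbb N$ let $V_j=\{T\in V: TS^le=0\text{ for }l=0,\dots,j-1\}$ (so $V_0=V$), let $r$ be the minimal natural number with $V_r=\{0\}$ (it exists), and for $j=0,\dots,r-1$ let $W_j$ be a linear complement of $V_{j+1}$ in $V_j$. For $k\ge1$ let $b_k=2\pi^{-2k}\zeta(2k)$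 ($\zeta$ the Riemann zeta function), so that $z/\tan z=1-\sum_{k>0}b_kz^{2k}$. Define $\Phi_{00}(T)=\sum_{k>0}b_k|T^ke|^2$ for $T\in V$ of small norm, $H(\epsilon)=\tfrac12\nabla^2\Phi_{00}(\epsilon S)$ (a symmetric bilinear form on $V$, for small $\epsilon\in\mathbb R$), and let $H_{ij}(\epsilon)$ be the restriction of $H(\epsilon)$ to $W_i\times W_j$. *)

theory Defs
  imports "HOL-Analysis.Analysis"
begin

text \<open>The first layer g1 is a Euclidean space 'a, the second layer g2 is 'b,
  the bracket g1 x g1 -> g2 is br. Endomorphisms of g1 are bounded linear maps.\<close>

definition Vset :: "('a::euclidean_space \<Rightarrow> 'a \<Rightarrow> 'b::euclidean_space) \<Rightarrow> ('a \<Rightarrow>\<^sub>L 'a) set" where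
  "Vset br = {T. \<exists>\<mu>::'b \<Rightarrow> real. linear \<mu> \<and>
       (\<forall>x x'. inner (blinfun_apply T x) x' = \<mu> (br x x'))}"

text \<open>Complex eigenvalues of a real endomorphism (eigenvalues of its complexification):
  lambda is an eigenvalue iff T(u + i v) = lambda (u + i v) for some u + i v nonzero.\<close>
definition ceig :: "('a::euclidean_space \<Rightarrow>\<^sub>L 'a) \<Rightarrow> complex set" where
  "ceig T = {z. \<exists>u v. (u \<noteq> 0 \<or> v \<noteq> 0) \<and>
       blinfun_apply T u = Re z *\<^sub>R u - Im z *\<^sub>R v \<and>
       blinfun_apply T v = Im z *\<^sub>R u + Re z *\<^sub>R v}"

definition Vgen :: "('a::euclidean_space \<Rightarrow> 'a \<Rightarrow> 'b::euclidean_space) \<Rightarrow> ('a \<Rightarrow>\<^sub>L 'a) set" where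
  "Vgen br = {T \<in> Vset br. \<forall>T' \<in> Vset br. card (ceig T') \<le> card (ceig T)}"

definition Vj :: "('a::euclidean_space \<Rightarrow> 'a \<Rightarrow> 'b::euclidean_space) \<Rightarrow> ('a \<Rightarrow>\<^sub>L 'a) \<Rightarrow> 'a \<Rightarrow> nat \<Rightarrow> ('a \<Rightarrow>\<^sub>L 'a) set" where
  "Vj br S e j = {T \<in> Vset br. \<forall>l<j. blinfun_apply T ((blinfun_apply S ^^ l) e) = 0}"

definition zeta_nat :: "nat \<Rightarrow> real" where
  "zeta_nat s = (\<Sum>n. 1 / (real (Suc n)) ^ s)"

definition bcoef :: "nat \<Rightarrow> real" where
  "bcoef k = 2 * pi powr (- 2 * real k) * zeta_nat (2 * k)"

definition Phi00 :: "'a::euclidean_space \<Rightarrow> ('a \<Rightarrow>\<^sub>L 'a) \<Rightarrow> real" where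
  "Phi00 e T = (\<Sum>k. bcoef (Suc k) * (norm ((blinfun_apply T ^^ Suc k) e))^2)"

text \<open>H(eps) = 1/2 Hessian of Phi00 at eps S, evaluated on (A,B):
  the mixed second directional derivative.\<close>
definition Hform :: "'a::euclidean_space \<Rightarrow> ('a \<Rightarrow>\<^sub>L 'a) \<Rightarrow> real \<Rightarrow> ('a \<Rightarrow>\<^sub>L 'a) \<Rightarrow> ('a \<Rightarrow>\<^sub>L 'a) \<Rightarrow> real" where
  "Hform e S \<epsilon> A B = 1/2 * deriv (\<lambda>s. deriv (\<lambda>t. Phi00 e (\<epsilon> *\<^sub>R S + s *\<^sub>R A + t *\<^sub>R B)) 0) 0"

end

theory Submission
  imports Defs
begin


primrec dv :: "('a::real_vector \<Rightarrow> 'a) \<Rightarrow> ('a \<Rightarrow> 'a) \<Rightarrow> 'a \<Rightarrow> nat \<Rightarrow> 'a" where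
  "dv M D e 0 = 0"
| "dv M D e (Suc k) = D ((M^^k) e) + M (dv M D e k)"

primrec dv2 :: "('a::real_vector \<Rightarrow> 'a) \<Rightarrow> ('a \<Rightarrow> 'a) \<Rightarrow> ('a \<Rightarrow> 'a) \<Rightarrow> 'a \<Rightarrow> nat \<Rightarrow> 'a" where
  "dv2 M DA DB e 0 = 0"
| "dv2 M DA DB e (Suc k) = DB (dv M DA e k) + DA (dv M DB e k) + M (dv2 M DA DB e k)"

lemma rec_closed:
  fixes S :: "'a::real_vector \<Rightarrow> 'a"
  assumes "linear S" "X 0 = 0" "\<And>k. X (Suc k) = Y k + S (X k)"
  shows "X m = (\<Sum>q<m. (S^^(m - Suc q)) (Y q))"
proof (induction m)
  case 0 then show ?case using assms by simp
next
  case (Suc m)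
  have "X (Suc m) = Y m + S (\<Sum>q<m. (S^^(m - Suc q)) (Y q))" using Suc assms(3) by simp
  also have "S (\<Sum>q<m. (S^^(m - Suc q)) (Y q)) = (\<Sum>q<m. (S^^(Suc m - Suc q)) (Y q))"
  proof -
    have "\<And>q. q<m \<Longrightarrow> S ((S^^(m - Suc q)) (Y q)) = (S^^(Suc m - Suc q)) (Y q)"
      by (simp add: Suc_diff_Suc[symmetric])
    then show ?thesis by (simp add: linear_sum[OF assms(1)])
  qed
  finally show ?case by (simp add: add.commute)
qed

lemma funpow_linear_0: fixes S :: "'a::real_vector \<Rightarrow> 'a" assumes "linear S" shows "(S^^n) 0 = 0"
proof (induction n)
  case 0 show ?case by simp
next
  case (Suc n) then show ?case using linear_0[OF assms] by simp
qed

lemma neg1_powi: "(-1::real) powi (- int n) = (-1)^n"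
  by (cases "even n") (simp_all add: power_int_minus)

lemma funpow_comp: "(S^^a) ((S^^b) x) = (S^^(a+b)) x"
  by (simp add: funpow_add)

lemma skew_pow:
  fixes S :: "'a::real_inner \<Rightarrow> 'a"
  assumes "\<And>x y. inner (S x) y = - inner x (S y)"
  shows "inner ((S^^a) x) y = (-1)^a * inner x ((S^^a) y)"
proof (induction a arbitrary: y)
  case 0 then show ?case by simp
next
  case (Suc a)
  have e1: "(S^^Suc a) y = (S^^a) (S y)" by (simp only: funpow_Suc_right comp_apply)
  have "inner ((S^^Suc a) x) y = - inner ((S^^a) x) (S y)" using assms by simp
  also have "\<dots> = - ((-1)^a * inner x ((S^^a) (S y)))" using Suc by simp
  finally have "inner ((S^^Suc a) x) y = - ((-1)^a * inner x ((S^^a) (S y)))" .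
  then show ?case unfolding e1 by simp
qed

lemma skew_pow':
  fixes S :: "'a::real_inner \<Rightarrow> 'a"
  assumes "\<And>x y. inner (S x) y = - inner x (S y)"
  shows "inner x ((S^^a) y) = (-1)^a * inner ((S^^a) x) y"
  using skew_pow[OF assms, of a x y] by (simp add: power_mult_distrib[symmetric])


context
  fixes S A B :: "'a::real_inner \<Rightarrow> 'a" and e :: 'a
  assumes linS: "linear S"
    and skS: "\<And>x y. inner (S x) y = - inner x (S y)"
    and skA: "\<And>x y. inner (A x) y = - inner x (A y)"
    and skB: "\<And>x y. inner (B x) y = - inner x (B y)"
begin

lemma dv_closed: "dv S D e m = (\<Sum>q<m. (S^^(m - Suc q)) (D ((S^^q) e)))"
  by (rule rec_closed[OF linS]) auto

lemma dv2_closed: "dv2 S A B e m = (\<Sum>q<m. (S^^(m - Suc q)) (B (dv S A e q) + A (dv S B e q)))"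
  by (rule rec_closed[OF linS]) auto

definition psi :: "nat \<Rightarrow> nat \<Rightarrow> nat \<Rightarrow> real" where
  "psi y z w = inner (A ((S^^y) e)) ((S^^z) (B ((S^^w) e)))"

definition cc :: "nat \<Rightarrow> real" where
  "cc m = inner (dv2 S A B e m) ((S^^m) e) + inner (dv S B e m) (dv S A e m)"

lemma part1a: "inner (B (dv S A e q)) y = - (\<Sum>c<q. (-1)^(q - Suc c) * inner (A ((S^^c) e)) ((S^^(q - Suc c)) (B y)))"
proof -
  have "inner (B (dv S A e q)) y = - inner (dv S A e q) (B y)" by (rule skB)
  also have "inner (dv S A e q) (B y) = (\<Sum>c<q. inner ((S^^(q - Suc c)) (A ((S^^c) e))) (B y))"
    by (simp add: dv_closed inner_sum_left)
  also have "\<dots> = (\<Sum>c<q. (-1)^(q - Suc c) * inner (A ((S^^c) e)) ((S^^(q - Suc c)) (B y)))"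
    by (simp add: skew_pow[OF skS])
  finally show ?thesis .
qed

lemma part1b: "inner (A (dv S B e q)) ((S^^n) e) = - (\<Sum>w<q. psi n (q - Suc w) w)"
proof -
  have "inner (A (dv S B e q)) ((S^^n) e) = - inner (dv S B e q) (A ((S^^n) e))" by (rule skA)
  also have "inner (dv S B e q) (A ((S^^n) e)) = (\<Sum>w<q. psi n (q - Suc w) w)"
    by (simp add: dv_closed inner_sum_left inner_sum_right psi_def inner_commute)
  finally show ?thesis .
qed

lemma cc_expand: "cc m =
   - (\<Sum>q<m. (-1)^(m - Suc q) * (\<Sum>c<q. (-1)^(q - Suc c) * psi c (q - Suc c) (m - Suc q + m)))
   - (\<Sum>q<m. (-1)^(m - Suc q) * (\<Sum>w<q. psi (m - Suc q + m) (q - Suc w) w))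
   + (\<Sum>c<m. \<Sum>w<m. (-1)^(m - Suc c) * psi c (m - Suc c + (m - Suc w)) w)"
proof -
  have p1: "inner (dv2 S A B e m) ((S^^m) e) =
     (\<Sum>q<m. (-1)^(m - Suc q) * (inner (B (dv S A e q)) ((S^^(m - Suc q + m)) e)
        + inner (A (dv S B e q)) ((S^^(m - Suc q + m)) e)))"
    by (simp add: dv2_closed inner_sum_left skew_pow[OF skS] funpow_comp inner_add_left)
  have p2: "inner (dv S B e m) (dv S A e m) =
     (\<Sum>c<m. \<Sum>w<m. (-1)^(m - Suc c) * psi c (m - Suc c + (m - Suc w)) w)"
  proof -
    have t: "inner ((S^^a) (B ((S^^w) e))) ((S^^b) (A ((S^^c) e))) = (-1)^b * psi c (b + a) w" for a b c w
      unfolding skew_pow'[OF skS, of _ b] funpow_comp psi_def by (simp add: inner_commute)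
    show ?thesis by (simp add: dv_closed inner_sum_left inner_sum_right t)
  qed
  have q: "\<And>q. (-1)^(m - Suc q) * (inner (B (dv S A e q)) ((S^^(m - Suc q + m)) e)
        + inner (A (dv S B e q)) ((S^^(m - Suc q + m)) e)) =
       - ((-1)^(m - Suc q) * (\<Sum>c<q. (-1)^(q - Suc c) * psi c (q - Suc c) (m - Suc q + m)))
       - (-1)^(m - Suc q) * (\<Sum>w<q. psi (m - Suc q + m) (q - Suc w) w)"
    unfolding part1a part1b by (simp add: psi_def algebra_simps)
  show ?thesis unfolding cc_def p1 p2 q
    by (simp only: sum.distrib sum_subtractf sum_negf)
qed


context
  fixes i j :: nat
  assumes hA: "\<And>l. l < i \<Longrightarrow> A ((S^^l) e) = 0"
    and hB: "\<And>l. l < j \<Longrightarrow> B ((S^^l) e) = 0"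
begin

lemma psi_low: assumes "y + z + w < i + j" shows "psi y z w = 0"
proof (cases "y < i")
  case True then show ?thesis by (simp add: psi_def hA)
next
  case False
  then have "w < j" using assms by arith
  then show ?thesis by (simp add: psi_def hB funpow_linear_0[OF linS])
qed

lemma psi_eq: assumes "y + z + w = i + j"
  shows "psi y z w = (if y = i \<and> z = 0 \<and> w = j then psi i 0 j else 0)"
proof (cases "y < i")
  case True then show ?thesis by (simp add: psi_def hA)
next
  case False
  show ?thesis
  proof (cases "w < j")
    case True then show ?thesis by (simp add: psi_def hB funpow_linear_0[OF linS])
  next
    case False
    with \<open>\<not> y < i\<close> assms have "y = i \<and> z = 0 \<and> w = j" by arith
    then show ?thesis by simp
  qed
qed

lemma cc_low: assumes "2*m < i + j + 2" shows "cc m = 0"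
proof -
  have a: "(-1)^(q - Suc c) * psi c (q - Suc c) (m - Suc q + m) = 0" if "c<q" "q<m" for q c
    using psi_low[of c "q - Suc c" "m - Suc q + m"] that assms by simp
  have b: "psi (m - Suc q + m) (q - Suc w) w = 0" if "w<q" "q<m" for q w
    using psi_low[of "m - Suc q + m" "q - Suc w" w] that assms by simp
  have c: "(-1)^(m - Suc c) * psi c (m - Suc c + (m - Suc w)) w = 0" if "c<m" "w<m" for c w
    using psi_low[of c "m - Suc c + (m - Suc w)" w] that assms by simp
  show ?thesis unfolding cc_expand
    using a b c by simp
qed

lemma cc_main: assumes m: "2*m = i + j + 2"
  shows "cc m = (-1) powi ((int i - int j) div 2) * psi i 0 j"
proof -
  define P where "P = psi i 0 j"
  have s1: "(\<Sum>q<m. (-1)^(m - Suc q) * (\<Sum>c<q. (-1)^(q - Suc c) * psi c (q - Suc c) (m - Suc q + m)))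
      = (if Suc i < m then (-1)^(m - Suc (Suc i)) * P else 0)"
  proof -
    have inner: "(\<Sum>c<q. (-1)^(q - Suc c) * psi c (q - Suc c) (m - Suc q + m)) = (if q = Suc i then P else 0)"
      if q: "q < m" for q
    proof -
      have "(-1)^(q - Suc c) * psi c (q - Suc c) (m - Suc q + m) = (if c = i then (if q = Suc i then P else 0) else 0)"
        if c: "c < q" for c
      proof -
        have "c + (q - Suc c) + (m - Suc q + m) = i + j" using c q m by arith
        from psi_eq[OF this] show ?thesis unfolding P_def using c q m by auto
      qed
      then have "(\<Sum>c<q. (-1)^(q - Suc c) * psi c (q - Suc c) (m - Suc q + m))
          = (\<Sum>c<q. (if c = i then (if q = Suc i then P else 0) else 0))" by (intro sum.cong) auto
      also have "\<dots> = (if q = Suc i then P else 0)" by (simp add: sum.delta)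
      finally show ?thesis .
    qed
    have "(\<Sum>q<m. (-1)^(m - Suc q) * (\<Sum>c<q. (-1)^(q - Suc c) * psi c (q - Suc c) (m - Suc q + m)))
       = (\<Sum>q<m. (if q = Suc i then (-1)^(m - Suc q) * P else 0))" by (intro sum.cong refl) (subst inner, auto)
    also have "\<dots> = (if Suc i < m then (-1)^(m - Suc (Suc i)) * P else 0)" by (simp add: sum.delta)
    finally show ?thesis .
  qed
  have s2: "(\<Sum>q<m. (-1)^(m - Suc q) * (\<Sum>w<q. psi (m - Suc q + m) (q - Suc w) w))
      = (if Suc j < m then (-1)^(m - Suc (Suc j)) * P else 0)"
  proof -
    have inner: "(\<Sum>w<q. psi (m - Suc q + m) (q - Suc w) w) = (if q = Suc j then P else 0)"
      if q: "q < m" for q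
    proof -
      have "psi (m - Suc q + m) (q - Suc w) w = (if w = j then (if q = Suc j then P else 0) else 0)"
        if c: "w < q" for w
      proof -
        have "(m - Suc q + m) + (q - Suc w) + w = i + j" using c q m by arith
        from psi_eq[OF this] show ?thesis unfolding P_def using c q m by auto
      qed
      then have "(\<Sum>w<q. psi (m - Suc q + m) (q - Suc w) w)
          = (\<Sum>w<q. (if w = j then (if q = Suc j then P else 0) else 0))" by (intro sum.cong) auto
      also have "\<dots> = (if q = Suc j then P else 0)" by (simp add: sum.delta)
      finally show ?thesis .
    qed
    have "(\<Sum>q<m. (-1)^(m - Suc q) * (\<Sum>w<q. psi (m - Suc q + m) (q - Suc w) w))
       = (\<Sum>q<m. (if q = Suc j then (-1)^(m - Suc q) * P else 0))" by (intro sum.cong refl) (subst inner, auto)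
    also have "\<dots> = (if Suc j < m then (-1)^(m - Suc (Suc j)) * P else 0)" by (simp add: sum.delta)
    finally show ?thesis .
  qed
  have s3: "(\<Sum>c<m. \<Sum>w<m. (-1)^(m - Suc c) * psi c (m - Suc c + (m - Suc w)) w)
      = (if i = j then P else 0)"
  proof -
    have t: "(-1)^(m - Suc c) * psi c (m - Suc c + (m - Suc w)) w
        = (if c = i then (if w = j then (if i = j then P else 0) else 0) else 0)"
      if "c < m" "w < m" for c w
    proof -
      have "c + (m - Suc c + (m - Suc w)) + w = i + j" using that m by arith
      from psi_eq[OF this] show ?thesis unfolding P_def using that m by auto
    qed
    have "(\<Sum>c<m. \<Sum>w<m. (-1)^(m - Suc c) * psi c (m - Suc c + (m - Suc w)) w)
       = (\<Sum>c<m. \<Sum>w<m. (if c = i then (if w = j then (if i = j then P else 0) else 0) else 0))"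
      by (intro sum.cong refl, rule t) auto
    also have "\<dots> = (\<Sum>c<m. (if c = i then (if j < m then (if i = j then P else 0) else 0) else 0))"
    proof (intro sum.cong refl)
      fix c show "(\<Sum>w<m. (if c = i then (if w = j then (if i = j then P else 0) else 0) else 0))
          = (if c = i then (if j < m then (if i = j then P else 0) else 0) else 0)"
        by (cases "c = i") (simp_all add: sum.delta)
    qed
    also have "\<dots> = (if i < m then (if j < m then (if i = j then P else 0) else 0) else 0)"
      by (simp add: sum.delta)
    also have "\<dots> = (if i = j then P else 0)" using m by auto
    finally show ?thesis .
  qed
  have cm: "cc m = - (if Suc i < m then (-1)^(m - Suc (Suc i)) * P else 0)
      - (if Suc j < m then (-1)^(m - Suc (Suc j)) * P else 0) + (if i = j then P else 0)"
    unfolding cc_expand s1 s2 s3 by simp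
  consider "i < j" | "i = j" | "j < i" by arith
  then show ?thesis
  proof cases
    case 1
    obtain d where d: "m = i + d + 2" "j = i + 2*d + 2" using m 1 by (intro that[of "m - i - 2"]) arith+
    have "(-1::real) powi ((int i - int j) div 2) = (-1)^Suc d"
    proof -
      have "(int i - int j) div 2 = - int (Suc d)" using d by simp
      then show ?thesis by (simp only: neg1_powi)
    qed
    then show ?thesis unfolding cm P_def using d by simp
  next
    case 2
    then have "m = Suc i" using m by arith
    then show ?thesis unfolding cm P_def using 2 by simp
  next
    case 3
    obtain d where d: "m = j + d + 2" "i = j + 2*d + 2" using m 3 by (intro that[of "m - j - 2"]) arith+
    have "(-1::real) powi ((int i - int j) div 2) = (-1)^Suc d"
    proof -
      have "(int i - int j) div 2 = int (Suc d)" using d by simp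
      then show ?thesis by (simp only: power_int_of_nat)
    qed
    then show ?thesis unfolding cm P_def using d by simp
  qed
qed

end

end




lemma series_deriv0:
  fixes f f' :: "nat \<Rightarrow> real \<Rightarrow> real"
  assumes dpos: "\<delta> > 0"
    and d: "\<And>n x. \<bar>x\<bar> < \<delta> \<Longrightarrow> (f n has_real_derivative f' n x) (at x)"
    and b: "\<And>n x. \<bar>x\<bar> < \<delta> \<Longrightarrow> \<bar>f' n x\<bar> \<le> Mb n"
    and sM: "summable Mb" and s0: "summable (\<lambda>n. f n 0)"
  shows "((\<lambda>x. \<Sum>n. f n x) has_real_derivative (\<Sum>n. f' n 0)) (at 0)"
proof (rule has_field_derivative_series'(2)[of "ball 0 \<delta>" f f' 0])
  show "convex (ball (0::real) \<delta>)" by simp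
  show "(f n has_real_derivative f' n x) (at x within ball 0 \<delta>)" if "x \<in> ball 0 \<delta>" for n x
    using d[of x n] that by (auto intro: has_field_derivative_at_within)
  show "uniformly_convergent_on (ball 0 \<delta>) (\<lambda>n x. \<Sum>i<n. f' i x)"
    unfolding uniformly_convergent_on_def
    by (rule exI, rule Weierstrass_m_test[OF _ sM]) (use b in auto)
  show "(0::real) \<in> ball 0 \<delta>" "0 \<in> interior (ball (0::real) \<delta>)" using dpos by auto
qed (rule s0)

lemma funpow_bound:
  fixes M :: "'a::real_normed_vector \<Rightarrow> 'a"
  assumes "\<And>x. norm (M x) \<le> R * norm x" "R \<ge> 0"
  shows "norm ((M^^k) e) \<le> R^k * norm e"
proof (induction k)
  case 0 then show ?case by simp
next
  case (Suc k)
  have "norm ((M^^Suc k) e) \<le> R * norm ((M^^k) e)" using assms(1) by simp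
  also have "\<dots> \<le> R * (R^k * norm e)" using Suc assms(2) by (rule mult_left_mono)
  finally show ?case by simp
qed

lemma dv_bound:
  fixes M D :: "'a::real_normed_vector \<Rightarrow> 'a"
  assumes M: "\<And>x. norm (M x) \<le> R * norm x" and D: "\<And>x. norm (D x) \<le> R * norm x" and R: "R \<ge> 0"
  shows "norm (dv M D e k) \<le> real k * R^k * norm e"
proof (induction k)
  case 0 then show ?case by simp
next
  case (Suc k)
  have "norm (dv M D e (Suc k)) \<le> norm (D ((M^^k) e)) + norm (M (dv M D e k))"
    by (simp add: norm_triangle_ineq)
  also have "\<dots> \<le> R * (R^k * norm e) + R * (real k * R^k * norm e)"
  proof (rule add_mono)
    show "norm (D ((M^^k) e)) \<le> R * (R^k * norm e)"
      using D[of "(M^^k) e"] funpow_bound[OF M R, of k e] R by (meson mult_left_mono order_trans)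
    show "norm (M (dv M D e k)) \<le> R * (real k * R^k * norm e)"
      using M[of "dv M D e k"] Suc R by (meson mult_left_mono order_trans)
  qed
  also have "\<dots> = real (Suc k) * R^Suc k * norm e" by (simp add: algebra_simps)
  finally show ?case .
qed

lemma dv2_bound:
  fixes M DA DB :: "'a::real_normed_vector \<Rightarrow> 'a"
  assumes M: "\<And>x. norm (M x) \<le> R * norm x" and DA: "\<And>x. norm (DA x) \<le> R * norm x"
    and DB: "\<And>x. norm (DB x) \<le> R * norm x" and R: "R \<ge> 0"
  shows "norm (dv2 M DA DB e k) \<le> real k ^ 2 * R^k * norm e"
proof (induction k)
  case 0 then show ?case by simp
next
  case (Suc k)
  have "norm (dv2 M DA DB e (Suc k)) \<le> norm (DB (dv M DA e k)) + norm (DA (dv M DB e k)) + norm (M (dv2 M DA DB e k))"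
    by (simp add: norm_triangle_le norm_triangle_ineq add_mono)
  also have "\<dots> \<le> R * (real k * R^k * norm e) + R * (real k * R^k * norm e) + R * (real k ^ 2 * R^k * norm e)"
  proof (intro add_mono)
    show "norm (DB (dv M DA e k)) \<le> R * (real k * R^k * norm e)"
      using DB[of "dv M DA e k"] dv_bound[OF M DA R, of e k] R by (meson mult_left_mono order_trans)
    show "norm (DA (dv M DB e k)) \<le> R * (real k * R^k * norm e)"
      using DA[of "dv M DB e k"] dv_bound[OF M DB R, of e k] R by (meson mult_left_mono order_trans)
    show "norm (M (dv2 M DA DB e k)) \<le> R * (real k ^ 2 * R^k * norm e)"
      using M[of "dv2 M DA DB e k"] Suc R by (meson mult_left_mono order_trans)
  qed
  also have "\<dots> \<le> real (Suc k) ^ 2 * R^Suc k * norm e"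
  proof -
    have "R * (real k * R^k * norm e) + R * (real k * R^k * norm e) + R * (real k ^ 2 * R^k * norm e)
      = (2 * real k + real k ^ 2) * (R^Suc k * norm e)" by (simp add: algebra_simps power2_eq_square)
    also have "\<dots> \<le> real (Suc k) ^ 2 * (R^Suc k * norm e)"
      by (rule mult_right_mono) (auto simp: power2_eq_square algebra_simps R)
    finally show ?thesis by (simp add: mult.assoc)
  qed
  finally show ?case .
qed

lemma dv_deriv:
  fixes N D :: "'a::real_normed_vector \<Rightarrow> 'a"
  assumes N: "bounded_linear N" and D: "bounded_linear D"
  shows "((\<lambda>t. ((\<lambda>x. N x + t *\<^sub>R D x)^^k) e) has_vector_derivative dv (\<lambda>x. N x + t *\<^sub>R D x) D e k) (at t)"
proof (induction k)
  case 0 then show ?case by simp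
next
  case (Suc k)
  let ?v = "\<lambda>t. ((\<lambda>x. N x + t *\<^sub>R D x)^^k) e"
  have 1: "((\<lambda>t. N (?v t)) has_vector_derivative N (dv (\<lambda>x. N x + t *\<^sub>R D x) D e k)) (at t)"
    by (rule bounded_linear.has_vector_derivative[OF N Suc])
  have 2: "((\<lambda>t. D (?v t)) has_vector_derivative D (dv (\<lambda>x. N x + t *\<^sub>R D x) D e k)) (at t)"
    by (rule bounded_linear.has_vector_derivative[OF D Suc])
  have 3: "((\<lambda>t. t *\<^sub>R D (?v t)) has_vector_derivative (t *\<^sub>R D (dv (\<lambda>x. N x + t *\<^sub>R D x) D e k) + 1 *\<^sub>R D (?v t))) (at t)"
    by (rule has_vector_derivative_scaleR[OF DERIV_ident 2])
  have "((\<lambda>t. N (?v t) + t *\<^sub>R D (?v t)) has_vector_derivative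
     N (dv (\<lambda>x. N x + t *\<^sub>R D x) D e k) + (t *\<^sub>R D (dv (\<lambda>x. N x + t *\<^sub>R D x) D e k) + 1 *\<^sub>R D (?v t))) (at t)"
    by (rule has_vector_derivative_add[OF 1 3])
  then show ?case by (simp add: algebra_simps)
qed

lemma dv2_deriv:
  fixes N A B :: "'a::real_normed_vector \<Rightarrow> 'a"
  assumes N: "bounded_linear N" and A: "bounded_linear A" and B: "bounded_linear B"
  shows "((\<lambda>s. dv (\<lambda>x. N x + s *\<^sub>R A x) B e k) has_vector_derivative dv2 (\<lambda>x. N x + s *\<^sub>R A x) A B e k) (at s)"
proof (induction k)
  case 0 then show ?case by simp
next
  case (Suc k)
  let ?u = "\<lambda>s. ((\<lambda>x. N x + s *\<^sub>R A x)^^k) e"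
  let ?w = "\<lambda>s. dv (\<lambda>x. N x + s *\<^sub>R A x) B e k"
  let ?u' = "dv (\<lambda>x. N x + s *\<^sub>R A x) A e k"
  let ?w' = "dv2 (\<lambda>x. N x + s *\<^sub>R A x) A B e k"
  have u: "(?u has_vector_derivative ?u') (at s)" by (rule dv_deriv[OF N A])
  have 1: "((\<lambda>s. B (?u s)) has_vector_derivative B ?u') (at s)"
    by (rule bounded_linear.has_vector_derivative[OF B u])
  have 2: "((\<lambda>s. N (?w s)) has_vector_derivative N ?w') (at s)"
    by (rule bounded_linear.has_vector_derivative[OF N Suc])
  have 3: "((\<lambda>s. A (?w s)) has_vector_derivative A ?w') (at s)"
    by (rule bounded_linear.has_vector_derivative[OF A Suc])
  have 4: "((\<lambda>s. s *\<^sub>R A (?w s)) has_vector_derivative (s *\<^sub>R A ?w' + 1 *\<^sub>R A (?w s))) (at s)"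
    by (rule has_vector_derivative_scaleR[OF DERIV_ident 3])
  have "((\<lambda>s. B (?u s) + (N (?w s) + s *\<^sub>R A (?w s))) has_vector_derivative
     B ?u' + (N ?w' + (s *\<^sub>R A ?w' + 1 *\<^sub>R A (?w s)))) (at s)"
    by (intro has_vector_derivative_add 1 2 4)
  then show ?case by (simp add: algebra_simps)
qed

lemma normsq_deriv:
  fixes v :: "real \<Rightarrow> 'a::real_inner"
  assumes "(v has_vector_derivative v') (at t)"
  shows "((\<lambda>t. (norm (v t))^2) has_real_derivative 2 * inner v' (v t)) (at t)"
proof -
  have "((\<lambda>t. inner (v t) (v t)) has_vector_derivative (inner (v t) v' + inner v' (v t))) (at t)"
    using bounded_bilinear.has_vector_derivative[OF bounded_bilinear_inner assms assms] .
  then show ?thesis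
    by (simp add: has_real_derivative_iff_has_vector_derivative power2_norm_eq_inner inner_commute)
qed

lemma inner_deriv:
  fixes v w :: "real \<Rightarrow> 'a::real_inner"
  assumes "(v has_vector_derivative v') (at t)" "(w has_vector_derivative w') (at t)"
  shows "((\<lambda>t. inner (w t) (v t)) has_real_derivative inner w' (v t) + inner (w t) v') (at t)"
proof -
  have "((\<lambda>t. inner (w t) (v t)) has_vector_derivative (inner (w t) v' + inner w' (v t))) (at t)"
    using bounded_bilinear.has_vector_derivative[OF bounded_bilinear_inner assms(2) assms(1)] .
  then show ?thesis
    by (simp add: has_real_derivative_iff_has_vector_derivative add.commute)
qed


lemma zeta_bound: assumes k: "k \<ge> 1" shows "0 \<le> zeta_nat (2*k) \<and> zeta_nat (2*k) \<le> 3"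
proof -
  have sq: "(\<lambda>n. 1 / (real (Suc n))^2) sums (pi^2/6)" using inverse_squares_sums by simp
  have le: "1 / (real (Suc n))^(2*k) \<le> 1 / (real (Suc n))^2" for n
  proof (rule divide_left_mono)
    show "real (Suc n)^2 \<le> real (Suc n)^(2*k)" by (rule power_increasing) (use k in auto)
  qed auto
  have sm: "summable (\<lambda>n. 1 / (real (Suc n))^(2*k))"
    by (rule summable_comparison_test'[OF sums_summable[OF sq], of 0]) (use le in auto)
  have "zeta_nat (2*k) \<le> (\<Sum>n. 1 / (real (Suc n))^2)"
    unfolding zeta_nat_def by (rule suminf_le[OF le sm sums_summable[OF sq]])
  also have "\<dots> = pi^2/6" using sq by (simp add: sums_iff)
  also have "\<dots> \<le> 3"
  proof -
    have "pi^2 \<le> 4^2" using pi_less_4 pi_gt_zero by (intro power_mono) auto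
    then show ?thesis by simp
  qed
  finally have "zeta_nat (2*k) \<le> 3" .
  moreover have "0 \<le> zeta_nat (2*k)" unfolding zeta_nat_def by (rule suminf_nonneg[OF sm]) simp
  ultimately show ?thesis by simp
qed

lemma bcoef_bound: assumes k: "k \<ge> 1" shows "0 \<le> bcoef k \<and> bcoef k \<le> 6 * (1/9)^k"
proof -
  have p: "pi powr (- 2 * real k) = (1 / pi^2)^k"
  proof -
    have "pi powr (- 2 * real k) = inverse (pi powr (real (2*k)))" by (simp add: powr_minus[symmetric])
    also have "\<dots> = inverse (pi^(2*k))" by (simp only: powr_realpow[OF pi_gt_zero])
    also have "\<dots> = (1/pi^2)^k" by (simp add: power_mult power_one_over inverse_eq_divide)
    finally show ?thesis .
  qed
  have q: "(1/pi^2)^k \<le> (1/9::real)^k"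
  proof (rule power_mono)
    have "(3::real)^2 \<le> pi^2" using pi_gt3 by (intro power_mono) auto
    then show "1/pi^2 \<le> 1/9" by (simp add: divide_simps)
  qed simp
  have z: "0 \<le> zeta_nat (2*k)" "zeta_nat (2*k) \<le> 3" using zeta_bound[OF k] by auto
  have "bcoef k = 2 * (1/pi^2)^k * zeta_nat (2*k)" unfolding bcoef_def p by simp
  moreover have "2 * (1/pi^2)^k * zeta_nat (2*k) \<le> 2 * (1/9)^k * 3"
    using q z by (intro mult_mono) auto
  ultimately show ?thesis using z by simp
qed

lemma sq_le_4pow: "real n ^ 2 \<le> 4 ^ n"
proof -
  have "real n \<le> 2^n" using less_exp[of n] by (metis of_nat_less_numeral_power_cancel_iff less_imp_le)
  then have "real n ^ 2 \<le> (2^n)^2" by (intro power_mono) auto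
  also have "\<dots> = (2^2)^n" by (simp only: power_mult[symmetric] mult.commute)
  also have "\<dots> = 4^n" by simp
  finally show ?thesis .
qed

lemma bmaj: "0 \<le> bcoef (Suc k) \<and> bcoef (Suc k) * real (Suc k) ^ 2 \<le> 6 * (4/9)^Suc k"
proof -
  have b: "0 \<le> bcoef (Suc k)" "bcoef (Suc k) \<le> 6 * (1/9)^Suc k" using bcoef_bound[of "Suc k"] by auto
  have "bcoef (Suc k) * real (Suc k) ^ 2 \<le> 6 * (1/9)^Suc k * 4^Suc k"
    using b sq_le_4pow[of "Suc k"] by (intro mult_mono) auto
  also have "\<dots> = 6 * (4/9)^Suc k" by (simp add: power_mult_distrib[symmetric])
  finally show ?thesis using b by simp
qed

lemma summable_maj: "summable (\<lambda>k. C * (6 * (4/9::real)^Suc k))"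
  by (intro summable_mult summable_geometric) simp




lemma termbound:
  fixes b x E c :: real
  assumes "0 \<le> b" "b * real n^2 \<le> c" "\<bar>x\<bar> \<le> real n^2 * E" "0 \<le> E"
  shows "\<bar>b * (2 * x)\<bar> \<le> 2 * E * c"
proof -
  have "\<bar>b * (2 * x)\<bar> = 2 * (b * \<bar>x\<bar>)" using assms(1) by (simp add: abs_mult)
  also have "b * \<bar>x\<bar> \<le> b * (real n^2 * E)" by (rule mult_left_mono[OF assms(3) assms(1)])
  also have "b * (real n^2 * E) = E * (b * real n^2)" by simp
  also have "\<dots> \<le> E * c" by (rule mult_left_mono[OF assms(2) assms(4)])
  finally show ?thesis by simp
qed

lemma bcoef_le: "0 \<le> bcoef (Suc k) \<and> bcoef (Suc k) \<le> 6 * (4/9)^Suc k"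
proof -
  have b: "0 \<le> bcoef (Suc k)" "bcoef (Suc k) * real (Suc k)^2 \<le> 6 * (4/9)^Suc k" using bmaj[of k] by auto
  have "bcoef (Suc k) * 1 \<le> bcoef (Suc k) * real (Suc k)^2"
    using b(1) by (intro mult_left_mono) auto
  then show ?thesis using b by simp
qed

context
  fixes Sf Af Bf :: "'a::euclidean_space \<Rightarrow> 'a" and e :: 'a and \<epsilon> :: real
  assumes blS: "bounded_linear Sf" and blA: "bounded_linear Af" and blB: "bounded_linear Bf"
    and nA: "\<And>x. norm (Af x) \<le> norm x" and nB: "\<And>x. norm (Bf x) \<le> norm x"
    and nS: "\<And>x. norm (\<epsilon> *\<^sub>R Sf x) \<le> 1/4 * norm x"
begin

lemma blS': "bounded_linear (\<lambda>x. \<epsilon> *\<^sub>R Sf x)"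
  by (rule bounded_linear_compose[OF bounded_linear_scaleR_right blS])

lemma blN: "bounded_linear (\<lambda>x. \<epsilon> *\<^sub>R Sf x + s *\<^sub>R Af x)"
  by (intro bounded_linear_add blS' bounded_linear_compose[OF bounded_linear_scaleR_right blA])

lemma Mbound: assumes "\<bar>s\<bar> \<le> 1/4" "\<bar>t\<bar> \<le> 1/4"
  shows "norm (\<epsilon> *\<^sub>R Sf x + s *\<^sub>R Af x + t *\<^sub>R Bf x) \<le> 1 * norm x"
proof -
  have tri: "norm (\<epsilon> *\<^sub>R Sf x + s *\<^sub>R Af x + t *\<^sub>R Bf x) \<le> norm (\<epsilon> *\<^sub>R Sf x) + norm (s *\<^sub>R Af x) + norm (t *\<^sub>R Bf x)"
    by (meson norm_triangle_le norm_triangle_ineq add_mono order_refl)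
  have a: "norm (s *\<^sub>R Af x) \<le> 1/4 * norm x"
  proof -
    have "\<bar>s\<bar> * norm (Af x) \<le> 1/4 * norm x" using assms(1) nA[of x] by (intro mult_mono) auto
    then show ?thesis by simp
  qed
  have b: "norm (t *\<^sub>R Bf x) \<le> 1/4 * norm x"
  proof -
    have "\<bar>t\<bar> * norm (Bf x) \<le> 1/4 * norm x" using assms(2) nB[of x] by (intro mult_mono) auto
    then show ?thesis by simp
  qed
  show ?thesis using tri a b nS[of x] norm_ge_zero[of x] by linarith
qed

lemma Mbound0: assumes "\<bar>s\<bar> \<le> 1/4" shows "norm (\<epsilon> *\<^sub>R Sf x + s *\<^sub>R Af x) \<le> 1 * norm x"
  using Mbound[OF assms, of 0 x] by simp

lemma nA1: "norm (Af x) \<le> 1 * norm x" using nA by simp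
lemma nB1: "norm (Bf x) \<le> 1 * norm x" using nB by simp

lemma inner_t:
  assumes s: "\<bar>s\<bar> < 1/4"
  shows "((\<lambda>t. \<Sum>k. bcoef (Suc k) * (norm (((\<lambda>x. \<epsilon> *\<^sub>R Sf x + s *\<^sub>R Af x + t *\<^sub>R Bf x)^^Suc k) e))^2)
     has_real_derivative
     (\<Sum>k. bcoef (Suc k) * (2 * inner (dv (\<lambda>x. \<epsilon> *\<^sub>R Sf x + s *\<^sub>R Af x) Bf e (Suc k))
         (((\<lambda>x. \<epsilon> *\<^sub>R Sf x + s *\<^sub>R Af x)^^Suc k) e)))) (at 0)"
proof -
  have "((\<lambda>t. \<Sum>k. bcoef (Suc k) * (norm (((\<lambda>x. \<epsilon> *\<^sub>R Sf x + s *\<^sub>R Af x + t *\<^sub>R Bf x)^^Suc k) e))^2)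
     has_real_derivative
     (\<Sum>k. bcoef (Suc k) * (2 * inner (dv (\<lambda>x. \<epsilon> *\<^sub>R Sf x + s *\<^sub>R Af x + 0 *\<^sub>R Bf x) Bf e (Suc k))
         (((\<lambda>x. \<epsilon> *\<^sub>R Sf x + s *\<^sub>R Af x + 0 *\<^sub>R Bf x)^^Suc k) e)))) (at 0)"
  proof (rule series_deriv0[where \<delta>="1/4" and Mb="\<lambda>k. 2 * (norm e)^2 * (6 * (4/9)^Suc k)"])
    fix k and t :: real
    show "((\<lambda>t. bcoef (Suc k) * (norm (((\<lambda>x. \<epsilon> *\<^sub>R Sf x + s *\<^sub>R Af x + t *\<^sub>R Bf x)^^Suc k) e))^2)
      has_real_derivative bcoef (Suc k) * (2 * inner (dv (\<lambda>x. \<epsilon> *\<^sub>R Sf x + s *\<^sub>R Af x + t *\<^sub>R Bf x) Bf e (Suc k))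
         (((\<lambda>x. \<epsilon> *\<^sub>R Sf x + s *\<^sub>R Af x + t *\<^sub>R Bf x)^^Suc k) e))) (at t)"
      by (intro DERIV_cmult normsq_deriv dv_deriv[OF blN blB])
  next
    fix k and t :: real
    assume t: "\<bar>t\<bar> < 1/4"
    have M: "\<And>x. norm (\<epsilon> *\<^sub>R Sf x + s *\<^sub>R Af x + t *\<^sub>R Bf x) \<le> 1 * norm x"
      using Mbound s t by simp
    let ?w = "dv (\<lambda>x. \<epsilon> *\<^sub>R Sf x + s *\<^sub>R Af x + t *\<^sub>R Bf x) Bf e (Suc k)"
    let ?v = "((\<lambda>x. \<epsilon> *\<^sub>R Sf x + s *\<^sub>R Af x + t *\<^sub>R Bf x)^^Suc k) e"
    have w: "norm ?w \<le> real (Suc k) * norm e" using dv_bound[OF M nB1, of e "Suc k"] by simp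
    have v: "norm ?v \<le> norm e" using funpow_bound[OF M, of "Suc k" e] by simp
    have "\<bar>inner ?w ?v\<bar> \<le> norm ?w * norm ?v" by (rule Cauchy_Schwarz_ineq2)
    also have "\<dots> \<le> (real (Suc k) * norm e) * norm e" using w v by (intro mult_mono) auto
    also have "\<dots> = real (Suc k) * (norm e)^2" by (simp add: power2_eq_square)
    also have "\<dots> \<le> real (Suc k)^2 * (norm e)^2"
      by (rule mult_right_mono) (simp_all add: power2_eq_square)
    finally have i: "\<bar>inner ?w ?v\<bar> \<le> real (Suc k)^2 * (norm e)^2" .
    show "\<bar>bcoef (Suc k) * (2 * inner ?w ?v)\<bar> \<le> 2 * (norm e)^2 * (6 * (4/9)^Suc k)"
      using termbound[of "bcoef (Suc k)" "Suc k" "6 * (4/9)^Suc k" "inner ?w ?v" "(norm e)^2"] bmaj[of k] i by auto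
  next
    show "summable (\<lambda>k. 2 * (norm e)^2 * (6 * (4/9::real)^Suc k))" by (rule summable_maj)
  next
    have M: "\<And>x. norm (\<epsilon> *\<^sub>R Sf x + s *\<^sub>R Af x + 0 *\<^sub>R Bf x) \<le> 1 * norm x"
      using Mbound[of s 0] s by simp
    show "summable (\<lambda>k. bcoef (Suc k) * (norm (((\<lambda>x. \<epsilon> *\<^sub>R Sf x + s *\<^sub>R Af x + 0 *\<^sub>R Bf x)^^Suc k) e))^2)"
    proof (rule summable_comparison_test'[OF summable_maj[of "(norm e)^2"], of 0])
      fix k :: nat
      have v: "norm (((\<lambda>x. \<epsilon> *\<^sub>R Sf x + s *\<^sub>R Af x + 0 *\<^sub>R Bf x)^^Suc k) e) \<le> norm e"
        using funpow_bound[OF M, of "Suc k" e] by simp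
      have b: "0 \<le> bcoef (Suc k)" "bcoef (Suc k) \<le> 6 * (4/9)^Suc k" using bcoef_le by auto
      have v2: "(norm (((\<lambda>x. \<epsilon> *\<^sub>R Sf x + s *\<^sub>R Af x + 0 *\<^sub>R Bf x)^^Suc k) e))^2 \<le> (norm e)^2"
        using v by (intro power_mono) auto
      have "norm (bcoef (Suc k) * (norm (((\<lambda>x. \<epsilon> *\<^sub>R Sf x + s *\<^sub>R Af x + 0 *\<^sub>R Bf x)^^Suc k) e))^2)
          = bcoef (Suc k) * (norm (((\<lambda>x. \<epsilon> *\<^sub>R Sf x + s *\<^sub>R Af x + 0 *\<^sub>R Bf x)^^Suc k) e))^2"
        using b by simp
      also have "\<dots> \<le> (6 * (4/9)^Suc k) * (norm e)^2" using b v2 by (intro mult_mono) auto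
      finally show "norm (bcoef (Suc k) * (norm (((\<lambda>x. \<epsilon> *\<^sub>R Sf x + s *\<^sub>R Af x + 0 *\<^sub>R Bf x)^^Suc k) e))^2)
          \<le> (norm e)^2 * (6 * (4/9)^Suc k)" by (simp add: mult.commute)
    qed
  qed simp
  then show ?thesis by simp
qed


lemma gbound: assumes s: "\<bar>s\<bar> \<le> 1/4"
  shows "\<bar>bcoef (Suc k) * (2 * inner (dv (\<lambda>x. \<epsilon> *\<^sub>R Sf x + s *\<^sub>R Af x) Bf e (Suc k))
         (((\<lambda>x. \<epsilon> *\<^sub>R Sf x + s *\<^sub>R Af x)^^Suc k) e))\<bar> \<le> 2 * (norm e)^2 * (6 * (4/9)^Suc k)"
proof -
  have M: "\<And>x. norm (\<epsilon> *\<^sub>R Sf x + s *\<^sub>R Af x) \<le> 1 * norm x" using Mbound0 s by simp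
  let ?w = "dv (\<lambda>x. \<epsilon> *\<^sub>R Sf x + s *\<^sub>R Af x) Bf e (Suc k)"
  let ?v = "((\<lambda>x. \<epsilon> *\<^sub>R Sf x + s *\<^sub>R Af x)^^Suc k) e"
  have w: "norm ?w \<le> real (Suc k) * norm e" using dv_bound[OF M nB1, of e "Suc k"] by simp
  have v: "norm ?v \<le> norm e" using funpow_bound[OF M, of "Suc k" e] by simp
  have "\<bar>inner ?w ?v\<bar> \<le> norm ?w * norm ?v" by (rule Cauchy_Schwarz_ineq2)
  also have "\<dots> \<le> (real (Suc k) * norm e) * norm e" using w v by (intro mult_mono) auto
  also have "\<dots> = real (Suc k) * (norm e)^2" by (simp add: power2_eq_square)
  also have "\<dots> \<le> real (Suc k)^2 * (norm e)^2"
    by (rule mult_right_mono) (simp_all add: power2_eq_square)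
  finally have i: "\<bar>inner ?w ?v\<bar> \<le> real (Suc k)^2 * (norm e)^2" .
  show ?thesis
    using termbound[of "bcoef (Suc k)" "Suc k" "6 * (4/9)^Suc k" "inner ?w ?v" "(norm e)^2"] bmaj[of k] i by auto
qed

lemma outer:
  "((\<lambda>s. \<Sum>k. bcoef (Suc k) * (2 * inner (dv (\<lambda>x. \<epsilon> *\<^sub>R Sf x + s *\<^sub>R Af x) Bf e (Suc k))
         (((\<lambda>x. \<epsilon> *\<^sub>R Sf x + s *\<^sub>R Af x)^^Suc k) e)))
   has_real_derivative
   (\<Sum>k. bcoef (Suc k) * (2 * (inner (dv2 (\<lambda>x. \<epsilon> *\<^sub>R Sf x) Af Bf e (Suc k)) (((\<lambda>x. \<epsilon> *\<^sub>R Sf x)^^Suc k) e)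
        + inner (dv (\<lambda>x. \<epsilon> *\<^sub>R Sf x) Bf e (Suc k)) (dv (\<lambda>x. \<epsilon> *\<^sub>R Sf x) Af e (Suc k)))))) (at 0)"
proof -
  have "((\<lambda>s. \<Sum>k. bcoef (Suc k) * (2 * inner (dv (\<lambda>x. \<epsilon> *\<^sub>R Sf x + s *\<^sub>R Af x) Bf e (Suc k))
         (((\<lambda>x. \<epsilon> *\<^sub>R Sf x + s *\<^sub>R Af x)^^Suc k) e)))
   has_real_derivative
   (\<Sum>k. bcoef (Suc k) * (2 * (inner (dv2 (\<lambda>x. \<epsilon> *\<^sub>R Sf x + 0 *\<^sub>R Af x) Af Bf e (Suc k)) (((\<lambda>x. \<epsilon> *\<^sub>R Sf x + 0 *\<^sub>R Af x)^^Suc k) e)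
        + inner (dv (\<lambda>x. \<epsilon> *\<^sub>R Sf x + 0 *\<^sub>R Af x) Bf e (Suc k)) (dv (\<lambda>x. \<epsilon> *\<^sub>R Sf x + 0 *\<^sub>R Af x) Af e (Suc k)))))) (at 0)"
  proof (rule series_deriv0[where \<delta>="1/4" and Mb="\<lambda>k. 2 * (2 * (norm e)^2) * (6 * (4/9)^Suc k)"])
    fix k and s :: real
    show "((\<lambda>s. bcoef (Suc k) * (2 * inner (dv (\<lambda>x. \<epsilon> *\<^sub>R Sf x + s *\<^sub>R Af x) Bf e (Suc k))
         (((\<lambda>x. \<epsilon> *\<^sub>R Sf x + s *\<^sub>R Af x)^^Suc k) e)))
      has_real_derivative bcoef (Suc k) * (2 * (inner (dv2 (\<lambda>x. \<epsilon> *\<^sub>R Sf x + s *\<^sub>R Af x) Af Bf e (Suc k)) (((\<lambda>x. \<epsilon> *\<^sub>R Sf x + s *\<^sub>R Af x)^^Suc k) e)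
        + inner (dv (\<lambda>x. \<epsilon> *\<^sub>R Sf x + s *\<^sub>R Af x) Bf e (Suc k)) (dv (\<lambda>x. \<epsilon> *\<^sub>R Sf x + s *\<^sub>R Af x) Af e (Suc k))))) (at s)"
      by (intro DERIV_cmult inner_deriv dv_deriv[OF blS' blA] dv2_deriv[OF blS' blA blB])
  next
    fix k and s :: real
    assume s: "\<bar>s\<bar> < 1/4"
    have M: "\<And>x. norm (\<epsilon> *\<^sub>R Sf x + s *\<^sub>R Af x) \<le> 1 * norm x" using Mbound0 s by simp
    let ?w = "dv (\<lambda>x. \<epsilon> *\<^sub>R Sf x + s *\<^sub>R Af x) Bf e (Suc k)"
    let ?v = "((\<lambda>x. \<epsilon> *\<^sub>R Sf x + s *\<^sub>R Af x)^^Suc k) e"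
    let ?w' = "dv2 (\<lambda>x. \<epsilon> *\<^sub>R Sf x + s *\<^sub>R Af x) Af Bf e (Suc k)"
    let ?v' = "dv (\<lambda>x. \<epsilon> *\<^sub>R Sf x + s *\<^sub>R Af x) Af e (Suc k)"
    have w: "norm ?w \<le> real (Suc k) * norm e" using dv_bound[OF M nB1, of e "Suc k"] by simp
    have v: "norm ?v \<le> norm e" using funpow_bound[OF M, of "Suc k" e] by simp
    have w': "norm ?w' \<le> real (Suc k)^2 * norm e" using dv2_bound[OF M nA1 nB1, of e "Suc k"] by simp
    have v': "norm ?v' \<le> real (Suc k) * norm e" using dv_bound[OF M nA1, of e "Suc k"] by simp
    have "\<bar>inner ?w' ?v + inner ?w ?v'\<bar> \<le> \<bar>inner ?w' ?v\<bar> + \<bar>inner ?w ?v'\<bar>" by (rule abs_triangle_ineq)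
    also have "\<dots> \<le> norm ?w' * norm ?v + norm ?w * norm ?v'" by (intro add_mono Cauchy_Schwarz_ineq2)
    also have "\<dots> \<le> (real (Suc k)^2 * norm e) * norm e + (real (Suc k) * norm e) * (real (Suc k) * norm e)"
      using w v w' v' by (intro add_mono mult_mono) auto
    also have "\<dots> = real (Suc k)^2 * (2 * (norm e)^2)" by (simp add: power2_eq_square algebra_simps)
    finally have i: "\<bar>inner ?w' ?v + inner ?w ?v'\<bar> \<le> real (Suc k)^2 * (2 * (norm e)^2)" .
    show "\<bar>bcoef (Suc k) * (2 * (inner ?w' ?v + inner ?w ?v'))\<bar> \<le> 2 * (2 * (norm e)^2) * (6 * (4/9)^Suc k)"
      using termbound[of "bcoef (Suc k)" "Suc k" "6 * (4/9)^Suc k" "inner ?w' ?v + inner ?w ?v'" "2 * (norm e)^2"] bmaj[of k] i by auto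
  next
    show "summable (\<lambda>k. 2 * (2 * (norm e)^2) * (6 * (4/9::real)^Suc k))" by (rule summable_maj)
  next
    show "summable (\<lambda>k. bcoef (Suc k) * (2 * inner (dv (\<lambda>x. \<epsilon> *\<^sub>R Sf x + 0 *\<^sub>R Af x) Bf e (Suc k))
         (((\<lambda>x. \<epsilon> *\<^sub>R Sf x + 0 *\<^sub>R Af x)^^Suc k) e)))"
      by (rule summable_comparison_test'[OF summable_maj[of "2 * (norm e)^2"], of 0])
         (use gbound[of 0] in \<open>simp only: real_norm_def\<close>)
  qed simp
  then show ?thesis by simp
qed

lemma Hval:
  "deriv (\<lambda>s. deriv (\<lambda>t. \<Sum>k. bcoef (Suc k) * (norm (((\<lambda>x. \<epsilon> *\<^sub>R Sf x + s *\<^sub>R Af x + t *\<^sub>R Bf x)^^Suc k) e))^2) 0) 0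
   = (\<Sum>k. bcoef (Suc k) * (2 * (inner (dv2 (\<lambda>x. \<epsilon> *\<^sub>R Sf x) Af Bf e (Suc k)) (((\<lambda>x. \<epsilon> *\<^sub>R Sf x)^^Suc k) e)
        + inner (dv (\<lambda>x. \<epsilon> *\<^sub>R Sf x) Bf e (Suc k)) (dv (\<lambda>x. \<epsilon> *\<^sub>R Sf x) Af e (Suc k)))))"
proof (rule DERIV_imp_deriv)
  show "((\<lambda>s. deriv (\<lambda>t. \<Sum>k. bcoef (Suc k) * (norm (((\<lambda>x. \<epsilon> *\<^sub>R Sf x + s *\<^sub>R Af x + t *\<^sub>R Bf x)^^Suc k) e))^2) 0)
    has_real_derivative (\<Sum>k. bcoef (Suc k) * (2 * (inner (dv2 (\<lambda>x. \<epsilon> *\<^sub>R Sf x) Af Bf e (Suc k)) (((\<lambda>x. \<epsilon> *\<^sub>R Sf x)^^Suc k) e)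
        + inner (dv (\<lambda>x. \<epsilon> *\<^sub>R Sf x) Bf e (Suc k)) (dv (\<lambda>x. \<epsilon> *\<^sub>R Sf x) Af e (Suc k)))))) (at 0)"
  proof (rule has_field_derivative_transform_within_open[OF outer open_ball])
    show "(0::real) \<in> ball 0 (1/4)" by simp
    fix s :: real assume "s \<in> ball 0 (1/4)"
    then have s: "\<bar>s\<bar> < 1/4" by simp
    show "(\<Sum>k. bcoef (Suc k) * (2 * inner (dv (\<lambda>x. \<epsilon> *\<^sub>R Sf x + s *\<^sub>R Af x) Bf e (Suc k))
         (((\<lambda>x. \<epsilon> *\<^sub>R Sf x + s *\<^sub>R Af x)^^Suc k) e)))
      = deriv (\<lambda>t. \<Sum>k. bcoef (Suc k) * (norm (((\<lambda>x. \<epsilon> *\<^sub>R Sf x + s *\<^sub>R Af x + t *\<^sub>R Bf x)^^Suc k) e))^2) 0"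
      using DERIV_imp_deriv[OF inner_t[OF s]] by simp
  qed
qed

end




lemma hom1:
  fixes Sf :: "'a::real_vector \<Rightarrow> 'a"
  assumes "linear Sf"
  shows "((\<lambda>x. \<epsilon> *\<^sub>R Sf x)^^m) e = \<epsilon>^m *\<^sub>R (Sf^^m) e"
proof (induction m)
  case 0 then show ?case by simp
next
  case (Suc m) then show ?case by (simp add: linear_scale[OF assms])
qed

lemma hom2:
  fixes Sf D :: "'a::real_vector \<Rightarrow> 'a"
  assumes S: "linear Sf" and D: "linear D"
  shows "dv (\<lambda>x. \<epsilon> *\<^sub>R Sf x) D e m = \<epsilon>^(m - 1) *\<^sub>R dv Sf D e m"
proof (induction m)
  case 0 then show ?case by simp
next
  case (Suc m)
  have k: "\<epsilon> *\<^sub>R Sf (\<epsilon>^(m - 1) *\<^sub>R dv Sf D e m) = \<epsilon>^m *\<^sub>R Sf (dv Sf D e m)"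
  proof (cases m)
    case 0 then show ?thesis by (simp add: linear_0[OF S])
  next
    case (Suc m') then show ?thesis by (simp add: linear_scale[OF S])
  qed
  have "dv (\<lambda>x. \<epsilon> *\<^sub>R Sf x) D e (Suc m) = D (((\<lambda>x. \<epsilon> *\<^sub>R Sf x)^^m) e) + \<epsilon> *\<^sub>R Sf (dv (\<lambda>x. \<epsilon> *\<^sub>R Sf x) D e m)"
    by (simp only: dv.simps)
  also have "\<dots> = D (\<epsilon>^m *\<^sub>R (Sf^^m) e) + \<epsilon> *\<^sub>R Sf (\<epsilon>^(m - 1) *\<^sub>R dv Sf D e m)"
    by (simp only: hom1[OF S] Suc.IH)
  also have "\<dots> = \<epsilon>^m *\<^sub>R (D ((Sf^^m) e) + Sf (dv Sf D e m))"
    by (simp only: k linear_scale[OF D] scaleR_add_right)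
  also have "\<dots> = \<epsilon>^(Suc m - 1) *\<^sub>R dv Sf D e (Suc m)" by simp
  finally show ?case .
qed

lemma dv2_1: "linear Sf \<Longrightarrow> linear A \<Longrightarrow> linear B \<Longrightarrow> dv2 Sf A B e (Suc 0) = 0"
  by (simp add: linear_0)

lemma hom3:
  fixes Sf A B :: "'a::real_vector \<Rightarrow> 'a"
  assumes S: "linear Sf" and A: "linear A" and B: "linear B"
  shows "dv2 (\<lambda>x. \<epsilon> *\<^sub>R Sf x) A B e m = \<epsilon>^(m - 2) *\<^sub>R dv2 Sf A B e m"
proof (induction m)
  case 0 then show ?case by simp
next
  case (Suc m)
  have k: "\<epsilon> *\<^sub>R Sf (\<epsilon>^(m - 2) *\<^sub>R dv2 Sf A B e m) = \<epsilon>^(m - 1) *\<^sub>R Sf (dv2 Sf A B e m)"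
  proof (cases "m \<ge> 2")
    case True
    then obtain d where "m = Suc (Suc d)" by (metis add_2_eq_Suc le_Suc_ex)
    then have "\<epsilon> * \<epsilon>^(m - 2) = \<epsilon>^(m - 1)" by simp
    then show ?thesis by (simp add: linear_scale[OF S])
  next
    case False
    then have "m = 0 \<or> m = Suc 0" by arith
    then have "dv2 Sf A B e m = 0" using dv2_1[OF S A B] by auto
    then show ?thesis by (simp add: linear_0[OF S])
  qed
  have "dv2 (\<lambda>x. \<epsilon> *\<^sub>R Sf x) A B e (Suc m) = B (dv (\<lambda>x. \<epsilon> *\<^sub>R Sf x) A e m) + A (dv (\<lambda>x. \<epsilon> *\<^sub>R Sf x) B e m)
      + \<epsilon> *\<^sub>R Sf (dv2 (\<lambda>x. \<epsilon> *\<^sub>R Sf x) A B e m)"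
    by (simp only: dv2.simps)
  also have "\<dots> = B (\<epsilon>^(m - 1) *\<^sub>R dv Sf A e m) + A (\<epsilon>^(m - 1) *\<^sub>R dv Sf B e m)
      + \<epsilon> *\<^sub>R Sf (\<epsilon>^(m - 2) *\<^sub>R dv2 Sf A B e m)"
    by (simp only: hom2[OF S A] hom2[OF S B] Suc.IH)
  also have "\<dots> = \<epsilon>^(m - 1) *\<^sub>R (B (dv Sf A e m) + A (dv Sf B e m) + Sf (dv2 Sf A B e m))"
    by (simp only: k linear_scale[OF A] linear_scale[OF B] scaleR_add_right)
  also have "\<dots> = \<epsilon>^(Suc m - 2) *\<^sub>R dv2 Sf A B e (Suc m)" by simp
  finally show ?case .
qed

lemma Xhom:
  fixes Sf A B :: "'a::real_inner \<Rightarrow> 'a"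
  assumes S: "linear Sf" and A: "linear A" and B: "linear B"
  shows "inner (dv2 (\<lambda>x. \<epsilon> *\<^sub>R Sf x) A B e (Suc k)) (((\<lambda>x. \<epsilon> *\<^sub>R Sf x)^^Suc k) e)
        + inner (dv (\<lambda>x. \<epsilon> *\<^sub>R Sf x) B e (Suc k)) (dv (\<lambda>x. \<epsilon> *\<^sub>R Sf x) A e (Suc k))
     = \<epsilon>^(2*k) * (inner (dv2 Sf A B e (Suc k)) ((Sf^^Suc k) e) + inner (dv Sf B e (Suc k)) (dv Sf A e (Suc k)))"
proof -
  have a: "inner (dv2 (\<lambda>x. \<epsilon> *\<^sub>R Sf x) A B e (Suc k)) (((\<lambda>x. \<epsilon> *\<^sub>R Sf x)^^Suc k) e)
      = \<epsilon>^(2*k) * inner (dv2 Sf A B e (Suc k)) ((Sf^^Suc k) e)"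
  proof (cases k)
    case 0 then show ?thesis by (simp only: hom3[OF S A B] dv2_1[OF S A B]) simp
  next
    case (Suc k')
    then have p: "\<epsilon>^(Suc k - 2) * \<epsilon>^(Suc k) = \<epsilon>^(2*k)" by (simp add: power_add[symmetric] mult_2)
    show ?thesis unfolding hom3[OF S A B] hom1[OF S] inner_scaleR_left inner_scaleR_right p[symmetric]
      by simp
  qed
  have b: "inner (dv (\<lambda>x. \<epsilon> *\<^sub>R Sf x) B e (Suc k)) (dv (\<lambda>x. \<epsilon> *\<^sub>R Sf x) A e (Suc k))
      = \<epsilon>^(2*k) * inner (dv Sf B e (Suc k)) (dv Sf A e (Suc k))"
  proof -
    have p: "\<epsilon>^(Suc k - 1) * \<epsilon>^(Suc k - 1) = \<epsilon>^(2*k)" by (simp add: power_add[symmetric] mult_2)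
    show ?thesis unfolding hom2[OF S A] hom2[OF S B] inner_scaleR_left inner_scaleR_right p[symmetric]
      by simp
  qed
  show ?thesis unfolding a b by (simp add: distrib_left)
qed




lemma cc_bound:
  fixes Sf Af Bf :: "'a::real_inner \<Rightarrow> 'a"
  assumes lin: "linear Sf" and skS: "\<And>x y. inner (Sf x) y = - inner x (Sf y)"
    and skA: "\<And>x y. inner (Af x) y = - inner x (Af y)"
    and skB: "\<And>x y. inner (Bf x) y = - inner x (Bf y)"
    and S: "\<And>x. norm (Sf x) \<le> R * norm x" and A: "\<And>x. norm (Af x) \<le> R * norm x"
    and B: "\<And>x. norm (Bf x) \<le> R * norm x" and R: "R \<ge> 0"
  shows "\<bar>cc Sf Af Bf e m\<bar> \<le> 2 * real m^2 * R^(2*m) * (norm e)^2"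
proof -
  have w': "norm (dv2 Sf Af Bf e m) \<le> real m^2 * R^m * norm e" by (rule dv2_bound[OF S A B R])
  have v: "norm ((Sf^^m) e) \<le> R^m * norm e" by (rule funpow_bound[OF S R])
  have w: "norm (dv Sf Bf e m) \<le> real m * R^m * norm e" by (rule dv_bound[OF S B R])
  have v': "norm (dv Sf Af e m) \<le> real m * R^m * norm e" by (rule dv_bound[OF S A R])
  have "\<bar>cc Sf Af Bf e m\<bar> \<le> \<bar>inner (dv2 Sf Af Bf e m) ((Sf^^m) e)\<bar> + \<bar>inner (dv Sf Bf e m) (dv Sf Af e m)\<bar>"
    unfolding cc_def[OF lin skS skA skB] by (rule abs_triangle_ineq)
  also have "\<dots> \<le> norm (dv2 Sf Af Bf e m) * norm ((Sf^^m) e) + norm (dv Sf Bf e m) * norm (dv Sf Af e m)"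
    by (intro add_mono Cauchy_Schwarz_ineq2)
  also have "\<dots> \<le> (real m^2 * R^m * norm e) * (R^m * norm e) + (real m * R^m * norm e) * (real m * R^m * norm e)"
    using w v w' v' R by (intro add_mono mult_mono) auto
  also have "\<dots> = 2 * real m^2 * R^(2*m) * (norm e)^2"
  proof -
    have h: "R^(2*m) = R^m * R^m" by (simp add: power_add[symmetric] mult_2)
    show ?thesis unfolding h power2_eq_square by (simp only: mult_ac distrib_left distrib_right)
  qed
  finally show ?thesis .
qed

lemma term_bound:
  fixes Sf Af Bf :: "'a::real_inner \<Rightarrow> 'a" and \<sigma> \<epsilon> :: real
  assumes lin: "linear Sf" and skS: "\<And>x y. inner (Sf x) y = - inner x (Sf y)"
    and skA: "\<And>x y. inner (Af x) y = - inner x (Af y)"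
    and skB: "\<And>x y. inner (Bf x) y = - inner x (Bf y)"
    and S: "\<And>x. norm (Sf x) \<le> \<sigma> * norm x" and A: "\<And>x. norm (Af x) \<le> \<sigma> * norm x"
    and B: "\<And>x. norm (Bf x) \<le> \<sigma> * norm x" and sig: "\<sigma> \<ge> 0" and eps: "\<bar>\<epsilon>\<bar> * \<sigma> \<le> 1"
    and p: "p \<le> 2*k"
  shows "\<bar>bcoef (Suc k) * (\<epsilon>^(2*k) * cc Sf Af Bf e (Suc k))\<bar>
     \<le> \<bar>\<epsilon>\<bar>^p * (2 * (norm e)^2 * \<sigma>^(p+2)) * (6 * (4/9)^Suc k)"
proof -
  have b: "0 \<le> bcoef (Suc k)" "bcoef (Suc k) * real (Suc k)^2 \<le> 6 * (4/9)^Suc k" using bmaj[of k] by auto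
  have c: "\<bar>cc Sf Af Bf e (Suc k)\<bar> \<le> 2 * real (Suc k)^2 * \<sigma>^(2*Suc k) * (norm e)^2"
    by (rule cc_bound[OF lin skS skA skB S A B sig])
  have pw: "(\<bar>\<epsilon>\<bar> * \<sigma>)^(2*k) \<le> (\<bar>\<epsilon>\<bar> * \<sigma>)^p"
    by (rule power_decreasing[OF p]) (use sig eps in auto)
  have "\<bar>bcoef (Suc k) * (\<epsilon>^(2*k) * cc Sf Af Bf e (Suc k))\<bar>
      = bcoef (Suc k) * (\<bar>\<epsilon>\<bar>^(2*k) * \<bar>cc Sf Af Bf e (Suc k)\<bar>)"
    using b by (simp add: abs_mult power_abs)
  also have "\<dots> \<le> bcoef (Suc k) * (\<bar>\<epsilon>\<bar>^(2*k) * (2 * real (Suc k)^2 * \<sigma>^(2*Suc k) * (norm e)^2))"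
    using b c by (intro mult_left_mono) auto
  also have "\<dots> = (bcoef (Suc k) * real (Suc k)^2) * ((\<bar>\<epsilon>\<bar> * \<sigma>)^(2*k) * (2 * \<sigma>^2 * (norm e)^2))"
  proof -
    have h1: "\<sigma>^(2*Suc k) = \<sigma>^(2*k) * \<sigma>^2" by (simp add: power_add[symmetric])
    show ?thesis unfolding h1 power_mult_distrib by (simp only: mult_ac)
  qed
  also have "\<dots> \<le> (6 * (4/9)^Suc k) * ((\<bar>\<epsilon>\<bar> * \<sigma>)^p * (2 * \<sigma>^2 * (norm e)^2))"
  proof -
    have x: "(\<bar>\<epsilon>\<bar> * \<sigma>)^(2*k) * (2 * \<sigma>^2 * (norm e)^2) \<le> (\<bar>\<epsilon>\<bar> * \<sigma>)^p * (2 * \<sigma>^2 * (norm e)^2)"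
      by (rule mult_right_mono[OF pw]) simp
    show ?thesis by (rule mult_mono[OF b(2) x]) (use sig in auto)
  qed
  also have "\<dots> = \<bar>\<epsilon>\<bar>^p * (2 * (norm e)^2 * \<sigma>^(p+2)) * (6 * (4/9)^Suc k)"
  proof -
    have h2: "\<sigma>^(p+2) = \<sigma>^p * \<sigma>^2" by (rule power_add)
    show ?thesis unfolding h2 power_mult_distrib by (simp only: mult_ac)
  qed
  finally show ?thesis .
qed




lemma main_expansion:
  fixes S A B :: "'a::euclidean_space \<Rightarrow>\<^sub>L 'a" and e :: 'a and \<epsilon> \<sigma> :: real and i j n :: nat
  assumes skS: "\<And>x y. inner (blinfun_apply S x) y = - inner x (blinfun_apply S y)"
    and skA: "\<And>x y. inner (blinfun_apply A x) y = - inner x (blinfun_apply A y)"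
    and skB: "\<And>x y. inner (blinfun_apply B x) y = - inner x (blinfun_apply B y)"
    and hA: "\<And>l. l < i \<Longrightarrow> blinfun_apply A ((blinfun_apply S ^^ l) e) = 0"
    and hB: "\<And>l. l < j \<Longrightarrow> blinfun_apply B ((blinfun_apply S ^^ l) e) = 0"
    and nA: "norm A \<le> 1" and nB: "norm B \<le> 1"
    and sig1: "1 \<le> \<sigma>" and sigS: "norm S \<le> \<sigma>"
    and eps: "\<bar>\<epsilon>\<bar> * \<sigma> \<le> 1/4"
    and n: "n = (if odd (i + j) then i + j + 1 else i + j + 2)"
  shows "\<bar>Hform e S \<epsilon> A B - (if odd (i + j) then 0 else
      (-1) powi ((int i - int j) div 2) * bcoef (1 + (i + j) div 2) * \<epsilon> ^ (i + j)
                * inner (blinfun_apply A ((blinfun_apply S ^^ i) e))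
                        (blinfun_apply B ((blinfun_apply S ^^ j) e)))\<bar>
    \<le> \<bar>\<epsilon>\<bar>^n * (2 * (norm e)^2 * \<sigma>^(n+2)) * (\<Sum>k. 6 * (4/9::real)^Suc k)"
proof -
  let ?S = "blinfun_apply S" and ?A = "blinfun_apply A" and ?B = "blinfun_apply B"
  have blS: "bounded_linear ?S" and blA: "bounded_linear ?A" and blB: "bounded_linear ?B"
    by (rule blinfun.bounded_linear_right)+
  have linS: "linear ?S" and linA: "linear ?A" and linB: "linear ?B"
    using blS blA blB bounded_linear.linear by blast+
  have nAx: "norm (?A x) \<le> norm x" for x
    by (rule order_trans[OF norm_blinfun]) (use mult_right_mono[OF nA norm_ge_zero[of x]] in simp)
  have nBx: "norm (?B x) \<le> norm x" for x
    by (rule order_trans[OF norm_blinfun]) (use mult_right_mono[OF nB norm_ge_zero[of x]] in simp)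
  have nSs: "norm (?S x) \<le> \<sigma> * norm x" for x
    by (rule order_trans[OF norm_blinfun]) (use mult_right_mono[OF sigS norm_ge_zero[of x]] in simp)
  have nAs: "norm (?A x) \<le> \<sigma> * norm x" for x
    by (rule order_trans[OF nAx]) (use mult_right_mono[OF sig1 norm_ge_zero[of x]] in simp)
  have nBs: "norm (?B x) \<le> \<sigma> * norm x" for x
    by (rule order_trans[OF nBx]) (use mult_right_mono[OF sig1 norm_ge_zero[of x]] in simp)
  have nSx: "norm (\<epsilon> *\<^sub>R ?S x) \<le> 1/4 * norm x" for x
  proof -
    have "norm (\<epsilon> *\<^sub>R ?S x) = \<bar>\<epsilon>\<bar> * norm (?S x)" by simp
    also have "\<dots> \<le> \<bar>\<epsilon>\<bar> * (\<sigma> * norm x)" by (rule mult_left_mono[OF nSs]) simp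
    also have "\<dots> = (\<bar>\<epsilon>\<bar> * \<sigma>) * norm x" by simp
    also have "\<dots> \<le> 1/4 * norm x" by (rule mult_right_mono[OF eps]) simp
    finally show ?thesis .
  qed
  have eps1: "\<bar>\<epsilon>\<bar> * \<sigma> \<le> 1" using eps by simp
  have sig0: "\<sigma> \<ge> 0" using sig1 by simp
  have app: "blinfun_apply (\<epsilon> *\<^sub>R S + s *\<^sub>R A + t *\<^sub>R B) = (\<lambda>x. \<epsilon> *\<^sub>R ?S x + s *\<^sub>R ?A x + t *\<^sub>R ?B x)" for s t
    by (rule ext) (simp add: plus_blinfun.rep_eq scaleR_blinfun.rep_eq)
  define g where "g k = 6 * (4/9::real)^Suc k" for k
  define ft where "ft k = bcoef (Suc k) * (\<epsilon>^(2*k) * cc ?S ?A ?B e (Suc k))" for k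
  have tb: "\<bar>ft k\<bar> \<le> \<bar>\<epsilon>\<bar>^p * (2 * (norm e)^2 * \<sigma>^(p+2)) * g k" if "p \<le> 2*k" for p k
    using term_bound[OF linS skS skA skB nSs nAs nBs sig0 eps1 that, where e=e] by (simp add: ft_def g_def)
  have sg: "summable (\<lambda>k. c * g k)" for c unfolding g_def by (rule summable_maj)
  have sterm: "summable ft"
    by (rule summable_comparison_test'[OF sg[of "\<bar>\<epsilon>\<bar>^0 * (2 * (norm e)^2 * \<sigma>^(0+2))"], of 0])
       (use tb[of 0] in simp)
  have H: "Hform e S \<epsilon> A B = suminf ft"
  proof -
    have "Hform e S \<epsilon> A B = 1/2 * (\<Sum>k. bcoef (Suc k) * (2 * (inner (dv2 (\<lambda>x. \<epsilon> *\<^sub>R ?S x) ?A ?B e (Suc k)) (((\<lambda>x. \<epsilon> *\<^sub>R ?S x)^^Suc k) e)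
        + inner (dv (\<lambda>x. \<epsilon> *\<^sub>R ?S x) ?B e (Suc k)) (dv (\<lambda>x. \<epsilon> *\<^sub>R ?S x) ?A e (Suc k)))))"
      unfolding Hform_def Phi00_def app
      by (subst Hval[OF blS blA blB nAx nBx nSx]) (rule refl)
    also have "(\<lambda>k. bcoef (Suc k) * (2 * (inner (dv2 (\<lambda>x. \<epsilon> *\<^sub>R ?S x) ?A ?B e (Suc k)) (((\<lambda>x. \<epsilon> *\<^sub>R ?S x)^^Suc k) e)
        + inner (dv (\<lambda>x. \<epsilon> *\<^sub>R ?S x) ?B e (Suc k)) (dv (\<lambda>x. \<epsilon> *\<^sub>R ?S x) ?A e (Suc k)))))
      = (\<lambda>k. 2 * ft k)"
      by (rule ext, simp only: Xhom[OF linS linA linB] cc_def[OF linS skS skA skB, symmetric])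
         (simp only: ft_def mult_ac)
    also have "(\<Sum>k. 2 * ft k) = 2 * suminf ft" by (rule suminf_mult[OF sterm])
    finally show ?thesis by simp
  qed
  define N where "N = i + j"
  define h where "h = N div 2"
  define fu where "fu k = (if 2*k \<le> N then 0 else ft k)" for k
  have low: "ft k = 0" if "2*k < N" for k
  proof -
    have "cc ?S ?A ?B e (Suc k) = 0"
      by (rule cc_low[OF linS skS skA skB hA hB]) (use that N_def in auto)
    then show ?thesis by (simp add: ft_def)
  qed
  have dec: "ft k = fu k + (if k = h then ft h else 0)" for k
  proof (cases "2*k \<le> N")
    case True
    show ?thesis
    proof (cases "k = h")
      case True then show ?thesis using \<open>2*k \<le> N\<close> by (simp add: fu_def)
    next
      case False
      then have "2*k < N" using \<open>2*k \<le> N\<close> h_def by arith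
      then show ?thesis using False by (simp add: fu_def low)
    qed
  next
    case False
    then have "k \<noteq> h" using h_def by arith
    then show ?thesis using False by (simp add: fu_def)
  qed
  have tb': "\<bar>fu k\<bar> \<le> \<bar>\<epsilon>\<bar>^n * (2 * (norm e)^2 * \<sigma>^(n+2)) * g k" for k
  proof (cases "2*k \<le> N")
    case True then show ?thesis using sig0 by (simp add: fu_def g_def)
  next
    case False
    have "n \<le> 2*k"
    proof (cases "odd (i + j)")
      case True then show ?thesis using n N_def False by simp
    next
      case ev: False
      then have "even (i + j)" by blast
      then obtain q where q: "i + j = 2*q" by (rule evenE)
      then show ?thesis using n N_def False ev by simp
    qed
    then show ?thesis using False tb by (simp add: fu_def)
  qed
  have sterm': "summable fu"
    by (rule summable_comparison_test'[OF sg, of 0]) (use tb' in simp)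
  have "(\<lambda>k. fu k + (if k = h then ft h else 0)) sums (suminf fu + ft h)"
    by (intro sums_add summable_sums[OF sterm'] sums_single)
  moreover have "(\<lambda>k. fu k + (if k = h then ft h else 0)) = ft" by (rule ext) (rule dec[symmetric])
  ultimately have "ft sums (suminf fu + ft h)" by simp
  then have split: "suminf ft = suminf fu + ft h" by (simp add: sums_iff)
  have th: "ft h = (if odd (i + j) then 0 else
      (-1) powi ((int i - int j) div 2) * bcoef (1 + (i + j) div 2) * \<epsilon> ^ (i + j)
                * inner (?A ((?S ^^ i) e)) (?B ((?S ^^ j) e)))"
  proof (cases "odd (i + j)")
    case True
    then have "2*h < N" using h_def N_def by arith
    then show ?thesis using True low by simp
  next
    case False
    then have hN: "2*h = N" using h_def N_def by arith
    have "cc ?S ?A ?B e (Suc h) = (-1) powi ((int i - int j) div 2) * psi ?S ?A ?B e i 0 j"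
      by (rule cc_main[OF linS skS skA skB hA hB]) (use hN N_def in auto)
    then show ?thesis using False hN
      by (simp add: ft_def psi_def[OF linS skS skA skB] h_def N_def mult_ac)
  qed
  have "\<bar>suminf fu\<bar> \<le> (\<Sum>k. \<bar>fu k\<bar>)"
    by (rule summable_rabs, rule summable_comparison_test'[OF sg, of 0]) (use tb' in simp)
  also have "\<dots> \<le> (\<Sum>k. \<bar>\<epsilon>\<bar>^n * (2 * (norm e)^2 * \<sigma>^(n+2)) * g k)"
    by (rule suminf_le[OF tb' _ sg]) (rule summable_comparison_test'[OF sg, of 0], use tb' in simp)
  also have "\<dots> = \<bar>\<epsilon>\<bar>^n * (2 * (norm e)^2 * \<sigma>^(n+2)) * (\<Sum>k. 6 * (4/9::real)^Suc k)"
  proof -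
    have sk: "summable (\<lambda>k. 6 * (4/9::real)^Suc k)" using summable_maj[of 1] by simp
    show ?thesis unfolding g_def by (rule suminf_mult[OF sk])
  qed
  finally show ?thesis using H split th by simp
qed


lemma Vset_skew:
  assumes T: "T \<in> Vset br" and sk: "\<forall>x y. br x y = - br y x"
  shows "inner (blinfun_apply T x) y = - inner x (blinfun_apply T y)"
proof -
  obtain \<mu> :: "'b \<Rightarrow> real" where lin: "linear \<mu>" and h: "\<forall>x x'. inner (blinfun_apply T x) x' = \<mu> (br x x')"
    using T unfolding Vset_def by blast
  have b: "br x y = - br y x" using sk by blast
  have "inner (blinfun_apply T x) y = \<mu> (br x y)" using h by blast
  also have "\<dots> = \<mu> (- br y x)" by (simp only: b)
  also have "\<dots> = - \<mu> (br y x)" by (rule linear_neg[OF lin])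
  also have "\<dots> = - inner (blinfun_apply T y) x" using h by simp
  finally show ?thesis by (simp add: inner_commute)
qed

theorem lemma3p2:
  fixes br :: "'a::euclidean_space \<Rightarrow> 'a \<Rightarrow> 'b::euclidean_space"
    and S :: "'a \<Rightarrow>\<^sub>L 'a" and e :: 'a and r :: nat and W :: "nat \<Rightarrow> ('a \<Rightarrow>\<^sub>L 'a) set"
  assumes br_bilinear: "bilinear br"
    and br_skew: "\<forall>x y. br x y = - br y x"
    and br_gen: "span (range (\<lambda>(x, y). br x y)) = UNIV"
    and g2_nonzero: "\<exists>z::'b. z \<noteq> 0"
    and S_gen: "S \<in> Vgen br"
    and e_proj: "\<forall>c::real. (\<exists>x. x \<noteq> 0 \<and> blinfun_apply S (blinfun_apply S x) = c *\<^sub>R x) \<longrightarrow>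
        closest_point {x. blinfun_apply S (blinfun_apply S x) = c *\<^sub>R x} e \<noteq> 0"
    and r_def: "r = (LEAST r. Vj br S e r = {0})"
    and W_compl: "\<forall>j<r. subspace (W j) \<and> W j \<subseteq> Vj br S e j \<and>
        W j \<inter> Vj br S e (Suc j) = {0} \<and>
        Vj br S e j = {A + B | A B. A \<in> W j \<and> B \<in> Vj br S e (Suc j)}"
  shows "\<forall>i<r. \<forall>j<r. \<exists>C \<delta>. \<delta> > 0 \<and>
     (\<forall>\<epsilon>::real. 0 < \<bar>\<epsilon>\<bar> \<and> \<bar>\<epsilon>\<bar> < \<delta> \<longrightarrow>
       (\<forall>A \<in> W i. \<forall>B \<in> W j. norm A \<le> 1 \<longrightarrow> norm B \<le> 1 \<longrightarrow>
         (if odd (i + j) then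
            \<bar>Hform e S \<epsilon> A B\<bar> \<le> C * \<bar>\<epsilon>\<bar> ^ (i + j + 1)
          else
            \<bar>Hform e S \<epsilon> A B
              - (-1) powi ((int i - int j) div 2) * bcoef (1 + (i + j) div 2) * \<epsilon> ^ (i + j)
                * inner (blinfun_apply A ((blinfun_apply S ^^ i) e))
                        (blinfun_apply B ((blinfun_apply S ^^ j) e))\<bar>
              \<le> C * \<bar>\<epsilon>\<bar> ^ (i + j + 2))))"
  proof (intro allI impI)
  fix i j assume i: "i < r" and j: "j < r"
  define \<sigma> where "\<sigma> = max 1 (norm S)"
  define n where "n = (if odd (i + j) then i + j + 1 else i + j + 2)"
  define K where "K = (\<Sum>k. 6 * (4/9::real)^Suc k)"
  define C where "C = 2 * (norm e)^2 * \<sigma>^(n+2) * K"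
  define \<delta> where "\<delta> = 1 / (4 * \<sigma>)"
  have sig1: "1 \<le> \<sigma>" and sigS: "norm S \<le> \<sigma>" unfolding \<sigma>_def by auto
  have skS: "\<And>x y. inner (blinfun_apply S x) y = - inner x (blinfun_apply S y)"
    using S_gen br_skew Vset_skew unfolding Vgen_def by blast
  show "\<exists>C \<delta>. \<delta> > 0 \<and>
     (\<forall>\<epsilon>::real. 0 < \<bar>\<epsilon>\<bar> \<and> \<bar>\<epsilon>\<bar> < \<delta> \<longrightarrow>
       (\<forall>A \<in> W i. \<forall>B \<in> W j. norm A \<le> 1 \<longrightarrow> norm B \<le> 1 \<longrightarrow>
         (if odd (i + j) then
            \<bar>Hform e S \<epsilon> A B\<bar> \<le> C * \<bar>\<epsilon>\<bar> ^ (i + j + 1)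
          else
            \<bar>Hform e S \<epsilon> A B
              - (-1) powi ((int i - int j) div 2) * bcoef (1 + (i + j) div 2) * \<epsilon> ^ (i + j)
                * inner (blinfun_apply A ((blinfun_apply S ^^ i) e))
                        (blinfun_apply B ((blinfun_apply S ^^ j) e))\<bar>
              \<le> C * \<bar>\<epsilon>\<bar> ^ (i + j + 2))))"
  proof (intro exI conjI allI impI ballI)
    show "\<delta> > 0" unfolding \<delta>_def using sig1 by simp
    fix \<epsilon> :: real and A B
    assume eps: "0 < \<bar>\<epsilon>\<bar> \<and> \<bar>\<epsilon>\<bar> < \<delta>" and A: "A \<in> W i" and B: "B \<in> W j"
      and nA: "norm A \<le> 1" and nB: "norm B \<le> 1"
    have AV: "A \<in> Vj br S e i" using A W_compl i by blast
    have BV: "B \<in> Vj br S e j" using B W_compl j by blast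
    have skA: "\<And>x y. inner (blinfun_apply A x) y = - inner x (blinfun_apply A y)"
      using AV br_skew Vset_skew unfolding Vj_def by blast
    have skB: "\<And>x y. inner (blinfun_apply B x) y = - inner x (blinfun_apply B y)"
      using BV br_skew Vset_skew unfolding Vj_def by blast
    have hA: "\<And>l. l < i \<Longrightarrow> blinfun_apply A ((blinfun_apply S ^^ l) e) = 0"
      using AV unfolding Vj_def by blast
    have hB: "\<And>l. l < j \<Longrightarrow> blinfun_apply B ((blinfun_apply S ^^ l) e) = 0"
      using BV unfolding Vj_def by blast
    have e4: "\<bar>\<epsilon>\<bar> * \<sigma> \<le> 1/4"
    proof -
      have "\<bar>\<epsilon>\<bar> * \<sigma> \<le> \<delta> * \<sigma>" using eps sig1 by (intro mult_right_mono) auto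
      also have "\<dots> = 1/4" unfolding \<delta>_def using sig1 by simp
      finally show ?thesis .
    qed
    have me: "\<bar>Hform e S \<epsilon> A B - (if odd (i + j) then 0 else
      (-1) powi ((int i - int j) div 2) * bcoef (1 + (i + j) div 2) * \<epsilon> ^ (i + j)
                * inner (blinfun_apply A ((blinfun_apply S ^^ i) e))
                        (blinfun_apply B ((blinfun_apply S ^^ j) e)))\<bar>
      \<le> \<bar>\<epsilon>\<bar>^n * (2 * (norm e)^2 * \<sigma>^(n+2)) * K"
      unfolding K_def by (rule main_expansion[OF skS skA skB hA hB nA nB sig1 sigS e4 n_def])
    have CC: "\<bar>\<epsilon>\<bar>^n * (2 * (norm e)^2 * \<sigma>^(n+2)) * K = C * \<bar>\<epsilon>\<bar>^n" unfolding C_def by simp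
    have me': "\<bar>Hform e S \<epsilon> A B - (if odd (i + j) then 0 else
      (-1) powi ((int i - int j) div 2) * bcoef (1 + (i + j) div 2) * \<epsilon> ^ (i + j)
                * inner (blinfun_apply A ((blinfun_apply S ^^ i) e))
                        (blinfun_apply B ((blinfun_apply S ^^ j) e)))\<bar>
      \<le> C * \<bar>\<epsilon>\<bar>^n" using me unfolding CC .
    show "if odd (i + j) then
            \<bar>Hform e S \<epsilon> A B\<bar> \<le> C * \<bar>\<epsilon>\<bar> ^ (i + j + 1)
          else
            \<bar>Hform e S \<epsilon> A B
              - (-1) powi ((int i - int j) div 2) * bcoef (1 + (i + j) div 2) * \<epsilon> ^ (i + j)
                * inner (blinfun_apply A ((blinfun_apply S ^^ i) e))
                        (blinfun_apply B ((blinfun_apply S ^^ j) e))\<bar>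
              \<le> C * \<bar>\<epsilon>\<bar> ^ (i + j + 2)"
    proof (cases "odd (i + j)")
      case True
      have n1: "n = i + j + 1" unfolding n_def using True by simp
      have "\<bar>Hform e S \<epsilon> A B\<bar> \<le> C * \<bar>\<epsilon>\<bar>^n" using me' by (simp only: True if_True diff_zero not_False_eq_True)
      then show ?thesis by (simp only: True if_True n1 not_False_eq_True)
    next
      case False
      have n2: "n = i + j + 2" unfolding n_def using False by simp
      show ?thesis using me' by (simp only: False if_False n2 not_True_eq_False not_not)
    qed
  qed
qed

end
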